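(* Let $\rho\colon\mathrm{Isom}(\mathbf H^1_{\mathbb C})_o\to\mathrm{Isom}(\mathbf H^\infty_{\mathbb C})_o$ be the complexification of an irreducible representation $\mathrm{Isom}(\mathbf H^1_{\mathbb C})_o\to\mathrm{Isom}(\mathbf H^\infty_{\mathbb R})_o$. Then $\mathrm{Im}\,K(b)=0$ for every $b\in\mathbb R$.
   Context: $\mathbf H^\infty_{\mathbb R}$ is defined from a real separable Hilbert space $\mathcal H_{\mathbb R}$ with a strongly non-degenerate symmetric bilinear form of signature $(1,\infty)$, and its isometries are induced by $O(1,\infty)$; a representation into $\mathrm{Isom}(\mathbf H^\infty_{\mathbb R})$ is a homomorphism into $O(1,\infty)$ acting on $\mathcal H_{\mathbb R}$; its complexification is the induced action on $\mathcal H=\mathcal H_{\mathbb R}\otimes\mathbb C$ with the sesquilinear extension $B$ of the form, giving a representation into $U(B)$ and hence into $\mathrm{Isom}(\mathbf H^\infty_{\mathbb C})_o$ where $\mathbf H^\infty_{\mathbb C}=\{[v]:B(v,v)>0\}$ (and this complexification is non-elementary). Representations are orbitally continuous homomorphisms; irreducible = no fixed point in the space or its boundary, no invariant pair of boundary points, and no proper invariant hyperbolic subspace. $\mathbf H^1_{\mathbb C}$: $\mathbb C^2$ with $B(z,w)=z_1\bar w_1-z_2\bar w_2$, $\xi_{1,2}=(e_1\pm e_2)/\sqrt2$; $g(\lambda,b)\in SU(1,1)$ has matrix $\begin{pmatrix}\lambda&ib\\0&\lambda^{-1}\end{pmatrix}$ in basis $(\xi_1,\xi_2)$. For non-elementary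 $\rho$ into $\mathrm{Isom}(\mathbf H^\infty_{\mathbb C})_o$: $\eta_1$ = unique common fixed boundary point of the $\rho(g(\lambda,b))$, $\eta_2$ = other endpoint of the common axis of the $\rho(g(\lambda,0))$, $\lambda\neq1$; isotropic representatives with $B(\eta_1,\eta_2)=1$; $E=\eta_1^\perp\cap\eta_2^\perp$; the lift $T_b\in U(B)$ of $\rho(g(1,b))$ with $T_b\eta_1=\eta_1$ satisfies $T_b\eta_2=K(b)\eta_1+\eta_2+c(b)$, $K(b)\in\mathbb C$, $c(b)\in E$ (the paper writes $\Delta(b)=\mathrm{Im}K(b)$). *)

theory Defs
  imports "HOL-Analysis.Analysis"
begin

text \<open>H_R is modelled as real x 'h with 'h an infinite-dimensional separable real
Hilbert space; the form is B((s,x),(t,y)) = s t - <x,y> (signature (1,infinity),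
strongly non-degenerate). Every such space is isometric to this model.\<close>

definition formB :: "real \<times> 'h::real_inner \<Rightarrow> real \<times> 'h \<Rightarrow> real" where
  "formB u v = fst u * fst v - inner (snd u) (snd v)"

definition infinite_dim :: "'h::real_vector itself \<Rightarrow> bool" where
  "infinite_dim TYPE('h) \<longleftrightarrow> \<not> (\<exists>S::'h set. finite S \<and> span S = UNIV)"

definition separable_space :: "'h::topological_space itself \<Rightarrow> bool" where
  "separable_space TYPE('h) \<longleftrightarrow> (\<exists>D::'h set. countable D \<and> closure D = UNIV)"

definition hermB1 :: "complex ^ 2 \<Rightarrow> complex ^ 2 \<Rightarrow> complex" where
  "hermB1 z w = z $ 1 * cnj (w $ 1) - z $ 2 * cnj (w $ 2)"

definition SU11 :: "(complex ^ 2 ^ 2) set" where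
  "SU11 = {A. det A = 1 \<and> (\<forall>z w. hermB1 (A *v z) (A *v w) = hermB1 z w)}"

text \<open>P has columns xi_1 = (e1+e2)/sqrt 2 and xi_2 = (e1-e2)/sqrt 2; P is its own inverse.\<close>
definition Pxi :: "complex ^ 2 ^ 2" where
  "Pxi = (\<chi> i j. if i = 2 \<and> j = 2 then - (1 / of_real (sqrt 2)) else 1 / of_real (sqrt 2))"

text \<open>g(lambda,b): matrix [[lambda, i b],[0, 1/lambda]] in the basis (xi_1, xi_2).\<close>
definition gxi :: "real \<Rightarrow> real \<Rightarrow> complex ^ 2 ^ 2" where
  "gxi l b = (\<chi> i j. if i = 1 \<and> j = 1 then complex_of_real l
                     else if i = 1 \<and> j = 2 then \<i> * complex_of_real b
                     else if i = 2 \<and> j = 2 then complex_of_real (1 / l) else 0)"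

definition gmat :: "real \<Rightarrow> real \<Rightarrow> complex ^ 2 ^ 2" where
  "gmat l b = Pxi ** gxi l b ** Pxi"

text \<open>A representation of Isom(H^1_C)_o = SU(1,1)/{+-1}: a homomorphism from SU(1,1)
into O(1,infinity) killing -1, orbitally continuous.\<close>
definition is_representation ::
  "(complex ^ 2 ^ 2 \<Rightarrow> real \<times> 'h::real_inner \<Rightarrow> real \<times> 'h) \<Rightarrow> bool" where
  "is_representation \<rho> \<longleftrightarrow>
     (\<forall>g\<in>SU11. bounded_linear (\<rho> g) \<and> bij (\<rho> g) \<and>
                (\<forall>x y. formB (\<rho> g x) (\<rho> g y) = formB x y)) \<and>
     (\<forall>g\<in>SU11. \<forall>h\<in>SU11. \<rho> (g ** h) = \<rho> g \<circ> \<rho> h) \<and>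
     \<rho> (- mat 1) = id \<and>
     (\<forall>x. continuous_on SU11 (\<lambda>g. \<rho> g x))"

definition proj_fixes :: "(real \<times> 'h::real_inner \<Rightarrow> real \<times> 'h) \<Rightarrow> real \<times> 'h \<Rightarrow> bool" where
  "proj_fixes T v \<longleftrightarrow> (\<exists>c. T v = c *\<^sub>R v)"

definition is_irreducible ::
  "(complex ^ 2 ^ 2 \<Rightarrow> real \<times> 'h::real_inner \<Rightarrow> real \<times> 'h) \<Rightarrow> bool" where
  "is_irreducible \<rho> \<longleftrightarrow>
     \<comment> \<open>no fixed point in H^infinity_R\<close>
     \<not> (\<exists>v. formB v v > 0 \<and> (\<forall>g\<in>SU11. proj_fixes (\<rho> g) v)) \<and>
     \<comment> \<open>no fixed point in the boundary\<close>
     \<not> (\<exists>v. v \<noteq> 0 \<and> formB v v = 0 \<and> (\<forall>g\<in>SU11. proj_fixes (\<rho> g) v)) \<and>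
     \<comment> \<open>no invariant pair of boundary points\<close>
     \<not> (\<exists>v w. v \<noteq> 0 \<and> formB v v = 0 \<and> w \<noteq> 0 \<and> formB w w = 0 \<and>
              \<not> (\<exists>c. w = c *\<^sub>R v) \<and>
              (\<forall>g\<in>SU11. (proj_fixes (\<rho> g) v \<and> proj_fixes (\<rho> g) w) \<or>
                         ((\<exists>c. \<rho> g v = c *\<^sub>R w) \<and> (\<exists>c. \<rho> g w = c *\<^sub>R v)))) \<and>
     \<comment> \<open>no proper invariant hyperbolic subspace\<close>
     \<not> (\<exists>W. subspace W \<and> closed W \<and> (\<exists>v\<in>W. formB v v > 0) \<and> W \<noteq> UNIV \<and>
              (\<forall>g\<in>SU11. \<rho> g ` W \<subseteq> W))"

text \<open>H = H_R tensor C is modelled as pairs (u,v) standing for u + i v.\<close>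

definition cscale :: "complex \<Rightarrow> ('v::real_vector \<times> 'v) \<Rightarrow> 'v \<times> 'v" where
  "cscale z p = (Re z *\<^sub>R fst p - Im z *\<^sub>R snd p, Re z *\<^sub>R snd p + Im z *\<^sub>R fst p)"

definition cformB :: "((real \<times> 'h::real_inner) \<times> (real \<times> 'h)) \<Rightarrow> ((real \<times> 'h) \<times> (real \<times> 'h)) \<Rightarrow> complex" where
  "cformB p q = Complex (formB (fst p) (fst q) + formB (snd p) (snd q))
                        (formB (snd p) (fst q) - formB (fst p) (snd q))"

definition cext :: "('v \<Rightarrow> 'v) \<Rightarrow> 'v \<times> 'v \<Rightarrow> 'v \<times> 'v" where
  "cext T p = (T (fst p), T (snd p))"

definition cproj_fixes :: "('v::real_vector \<times> 'v \<Rightarrow> 'v \<times> 'v) \<Rightarrow> 'v \<times> 'v \<Rightarrow> bool" where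
  "cproj_fixes T v \<longleftrightarrow> (\<exists>\<mu>. T v = cscale \<mu> v)"

end

theory Submission
  imports Defs
begin


lemma formB_add_left: "formB (x + y) z = formB x z + formB y z"
  by (simp add: formB_def inner_add_left algebra_simps)
lemma formB_diff_left: "formB (x - y) z = formB x z - formB y z"
  by (simp add: formB_def inner_diff_left algebra_simps)
lemma formB_scale_left: "formB (r *\<^sub>R x) z = r * formB x z"
  by (simp add: formB_def algebra_simps)
lemma formB_sym: "formB y x = formB x y"
  by (simp add: formB_def inner_commute mult.commute)
lemma formB_add_right: "formB z (x + y) = formB z x + formB z y"
  by (simp add: formB_def inner_add_right algebra_simps)
lemma formB_diff_right: "formB z (x - y) = formB z x - formB z y"
  by (simp add: formB_def inner_diff_right algebra_simps)
lemma formB_scale_right: "formB z (r *\<^sub>R x) = r * formB z x"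
  by (simp add: formB_def algebra_simps)
lemma formB_neg_left: "formB (- x) z = - formB x z"
  by (simp add: formB_def)
lemma formB_neg_right: "formB z (- x) = - formB z x"
  by (simp add: formB_def)
lemma formB_zero_left: "formB 0 z = 0" by (simp add: formB_def)
lemma formB_zero_right: "formB z 0 = 0" by (simp add: formB_def)

lemmas fB = formB_add_left formB_diff_left formB_scale_left formB_add_right
  formB_diff_right formB_scale_right formB_neg_left formB_neg_right formB_zero_left formB_zero_right

lemma cformB_add_left: "cformB (x + y) z = cformB x z + cformB y z"
  by (simp add: cformB_def fB complex_eq_iff)
lemma cformB_add_right: "cformB z (x + y) = cformB z x + cformB z y"
  by (simp add: cformB_def fB complex_eq_iff)
lemma cformB_diff_left: "cformB (x - y) z = cformB x z - cformB y z"
  by (simp add: cformB_def fB complex_eq_iff)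
lemma cformB_diff_right: "cformB z (x - y) = cformB z x - cformB z y"
  by (simp add: cformB_def fB complex_eq_iff)
lemma cformB_scale_left: "cformB (cscale a x) z = a * cformB x z"
  by (simp add: cformB_def cscale_def fB complex_eq_iff algebra_simps)
lemma cformB_scale_right: "cformB z (cscale a x) = cnj a * cformB z x"
  by (simp add: cformB_def cscale_def fB complex_eq_iff algebra_simps)
lemma cformB_sym: "cformB y x = cnj (cformB x y)"
  by (simp add: cformB_def complex_eq_iff formB_sym)
lemma cformB_zero_left: "cformB 0 z = 0"
  by (simp add: cformB_def fB complex_eq_iff)

lemmas cB = cformB_add_left cformB_add_right cformB_diff_left cformB_diff_right
  cformB_scale_left cformB_scale_right cformB_zero_left

lemma cscale_cscale: "cscale a (cscale b x) = cscale (a * b) x"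
  by (simp add: cscale_def prod_eq_iff algebra_simps)
lemma cscale_one: "cscale 1 x = x"
  by (simp add: cscale_def)
lemma cscale_add_left: "cscale a x + cscale b x = cscale (a + b) x"
  by (simp add: cscale_def prod_eq_iff algebra_simps)
lemma cscale_add_right: "cscale a (x + y) = cscale a x + cscale a y"
  by (simp add: cscale_def prod_eq_iff algebra_simps)
lemma cscale_diff_left: "cscale a x - cscale b x = cscale (a - b) x"
  by (simp add: cscale_def prod_eq_iff algebra_simps)
lemma cscale_zero: "cscale 0 x = 0"
  by (simp add: cscale_def prod_eq_iff)
lemma cscale_eq_0: "cscale a (x::'v::real_vector \<times> 'v) = 0 \<longleftrightarrow> a = 0 \<or> x = 0"
proof
  assume h: "cscale a x = 0"
  show "a = 0 \<or> x = 0"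
  proof (rule ccontr)
    assume "\<not> (a = 0 \<or> x = 0)"
    hence "a \<noteq> 0" "x \<noteq> 0" by auto
    have "cscale (inverse a) (cscale a x) = x" using \<open>a \<noteq> 0\<close> by (simp add: cscale_cscale cscale_one)
    also have "cscale (inverse a) (cscale a x) = 0" using h by (simp add: cscale_def zero_prod_def)
    finally show False using \<open>x \<noteq> 0\<close> by simp
  qed
next
  assume "a = 0 \<or> x = 0" thus "cscale a x = 0" by (auto simp: cscale_def zero_prod_def)
qed

lemma cscale_cancel:
  assumes "cscale a x = cscale b x" "x \<noteq> 0" shows "a = b"
proof -
  have "cscale (a - b) x = 0" using assms(1) by (metis cscale_diff_left diff_self)
  thus ?thesis using assms(2) by (simp add: cscale_eq_0)
qed

definition Jc :: "'v::real_vector \<times> 'v \<Rightarrow> 'v \<times> 'v" where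
  "Jc p = (fst p, - snd p)"

lemma Jc_Jc: "Jc (Jc x) = x" by (simp add: Jc_def)
lemma Jc_scale: "Jc (cscale a x) = cscale (cnj a) (Jc x)"
  by (simp add: Jc_def cscale_def prod_eq_iff algebra_simps)
lemma Jc_add: "Jc (x + y) = Jc x + Jc y" by (simp add: Jc_def prod_eq_iff)
lemma Jc_eq_0: "Jc x = 0 \<longleftrightarrow> x = 0" by (auto simp: Jc_def prod_eq_iff)
lemma cformB_Jc: "cformB (Jc x) (Jc y) = cnj (cformB x y)"
  by (simp add: cformB_def Jc_def complex_eq_iff fB)

lemma cext_Jc: "linear S \<Longrightarrow> cext S (Jc x) = Jc (cext S x)"
  by (simp add: cext_def Jc_def linear_neg)
lemma cext_scale: "linear S \<Longrightarrow> cext S (cscale a x) = cscale a (cext S x)"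
  by (simp add: cext_def cscale_def linear_diff linear_add linear_scale)
lemma cext_cformB: "(\<forall>x y. formB (S x) (S y) = formB x y) \<Longrightarrow> cformB (cext S x) (cext S y) = cformB x y"
  by (simp add: cext_def cformB_def del: split_paired_All)


definition rr :: complex where "rr = 1 / complex_of_real (sqrt 2)"
lemma s2: "rr * rr = 1/2"
proof -
  have "complex_of_real (sqrt 2) * complex_of_real (sqrt 2) = complex_of_real (sqrt 2 * sqrt 2)"
    by (simp only: of_real_mult)
  also have "\<dots> = 2" by simp
  finally have h: "complex_of_real (sqrt 2) * complex_of_real (sqrt 2) = 2" .
  have "rr * rr = 1 / (complex_of_real (sqrt 2) * complex_of_real (sqrt 2))"
    unfolding rr_def by (simp only: divide_inverse inverse_mult_distrib mult_1_left)
  thus ?thesis using h by simp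
qed
lemma rr_cnj[simp]: "cnj rr = rr" by (simp add: rr_def)
lemma cscaleR: "r *\<^sub>R (z::complex) = complex_of_real r * z" by (simp add: scaleR_conv_of_real)
lemma s2': "rr * (rr * x) = x/2" by (simp add: mult.assoc[symmetric] s2)
lemma Pxi_eq: "Pxi = (\<chi> i j. if i = 2 \<and> j = 2 then - rr else rr)"
  unfolding Pxi_def rr_def by (rule refl)

lemma Pxi_sq: "Pxi ** Pxi = mat 1"
  by (simp add: Pxi_eq vec_eq_iff forall_2 matrix_matrix_mult_def sum_2 mat_def s2)
lemma gxi_mult: "gxi l b ** gxi l' b' = gxi (l*l') (l*b' + b/l')"
  by (simp add: vec_eq_iff forall_2 matrix_matrix_mult_def sum_2 gxi_def algebra_simps)

lemma gmat_mult: "gmat l b ** gmat l' b' = gmat (l*l') (l*b' + b/l')"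
proof -
  have "gmat l b ** gmat l' b' = Pxi ** gxi l b ** (Pxi ** Pxi) ** gxi l' b' ** Pxi"
    unfolding gmat_def by (simp add: matrix_mul_assoc)
  also have "\<dots> = Pxi ** (gxi l b ** gxi l' b') ** Pxi"
    by (simp add: Pxi_sq matrix_mul_assoc)
  finally show ?thesis by (simp add: gxi_mult gmat_def)
qed

lemma gxi_10: "gxi 1 0 = mat 1"
  by (simp add: vec_eq_iff forall_2 gxi_def mat_def)

lemma gmat_10: "gmat 1 0 = mat 1"
  by (simp add: gmat_def gxi_10 Pxi_sq)

definition M0 :: "complex ^ 2 ^ 2" where
  "M0 = (\<chi> i j. if j = 1 then \<i>/2 else - \<i>/2)"

lemma gmat_1b: "gmat 1 b = mat 1 + b *\<^sub>R M0"
  by (simp add: vec_eq_iff forall_2 matrix_matrix_mult_def sum_2 gmat_def gxi_def Pxi_eq mat_def M0_def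
      algebra_simps s2 s2' cscaleR)

lemma cont_gmat: "continuous_on S (\<lambda>b. gmat 1 b)"
  unfolding gmat_1b by (intro continuous_intros)

definition Jf :: "complex ^ 2 \<Rightarrow> complex ^ 2 \<Rightarrow> complex" where
  "Jf z w = z $ 1 * cnj (w $ 2) + z $ 2 * cnj (w $ 1)"

lemma herm_P: "hermB1 (Pxi *v z) (Pxi *v w) = Jf z w"
  by (simp add: hermB1_def Jf_def matrix_vector_mult_def sum_2 Pxi_eq algebra_simps s2 s2')

lemma Jf_gxi: "l \<noteq> 0 \<Longrightarrow> Jf (gxi l b *v z) (gxi l b *v w) = Jf z w"
  by (simp add: Jf_def matrix_vector_mult_def sum_2 gxi_def algebra_simps)

lemma gmat_SU11: assumes "l \<noteq> 0" shows "gmat l b \<in> SU11"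
proof -
  have dP: "det Pxi = -1" by (simp add: det_2 Pxi_eq s2)
  have dG: "det (gxi l b) = 1" using assms by (simp add: det_2 gxi_def)
  have "det (gmat l b) = 1" by (simp add: gmat_def det_mul dP dG)
  moreover have "hermB1 (gmat l b *v z) (gmat l b *v w) = hermB1 z w" for z w
  proof -
    have "hermB1 z w = hermB1 (Pxi *v (Pxi *v z)) (Pxi *v (Pxi *v w))"
      by (simp add: matrix_vector_mul_assoc Pxi_sq)
    also have "\<dots> = Jf (Pxi *v z) (Pxi *v w)" by (rule herm_P)
    also have "\<dots> = Jf (gxi l b *v (Pxi *v z)) (gxi l b *v (Pxi *v w))" using Jf_gxi[OF assms] by simp
    also have "\<dots> = hermB1 (gmat l b *v z) (gmat l b *v w)"
      using herm_P[of "gxi l b *v (Pxi *v z)" "gxi l b *v (Pxi *v w)"]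
      by (simp add: gmat_def matrix_vector_mul_assoc matrix_mul_assoc)
    finally show ?thesis by simp
  qed
  ultimately show ?thesis by (simp add: SU11_def)
qed

lemma one_SU11: "mat 1 \<in> SU11"
  by (simp add: SU11_def)



definition c0 :: "(real \<times> 'h::real_inner) \<times> (real \<times> 'h) \<Rightarrow> complex" where
  "c0 z = Complex (fst (fst z)) (fst (snd z))"

lemma c0_scale: "c0 (cscale a z) = a * c0 z"
  by (simp add: c0_def cscale_def complex_eq_iff algebra_simps)
lemma c0_diff: "c0 (x - y) = c0 x - c0 y"
  by (simp add: c0_def complex_eq_iff)

lemma cformB_self: "cformB z z = Complex (fst (fst z) ^ 2 + fst (snd z) ^ 2
   - (inner (snd (fst z)) (snd (fst z)) + inner (snd (snd z)) (snd (snd z)))) 0"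
  by (simp add: cformB_def formB_def power2_eq_square inner_commute)

lemma iso_c0_zero:
  fixes z :: "(real \<times> 'h::real_inner) \<times> (real \<times> 'h)"
  assumes "c0 z = 0" "cformB z z = 0" shows "z = 0"
proof -
  have a: "fst (fst z) = 0" "fst (snd z) = 0" using assms(1) by (auto simp: c0_def complex_eq_iff)
  have "inner (snd (fst z)) (snd (fst z)) + inner (snd (snd z)) (snd (snd z)) = 0"
    using assms(2) a by (simp add: cformB_self complex_eq_iff)
  hence "snd (fst z) = 0" "snd (snd z) = 0"
    by (smt (verit) inner_eq_zero_iff inner_ge_zero)+
  with a show ?thesis by (simp add: prod_eq_iff)
qed

lemma iso_c0_nz:
  fixes z :: "(real \<times> 'h::real_inner) \<times> (real \<times> 'h)"
  assumes "z \<noteq> 0" "cformB z z = 0" shows "c0 z \<noteq> 0"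
  using iso_c0_zero assms by blast

lemma iso_prop:
  fixes x y :: "(real \<times> 'h::real_inner) \<times> (real \<times> 'h)"
  assumes "x \<noteq> 0" "cformB x x = 0" "cformB y y = 0" "cformB y x = 0"
  shows "\<exists>\<kappa>. y = cscale \<kappa> x"
proof -
  define \<kappa> where "\<kappa> = c0 y / c0 x"
  have nz: "c0 x \<noteq> 0" using iso_c0_nz assms(1,2) by blast
  define y' where "y' = y - cscale \<kappa> x"
  have "c0 y' = 0" using nz by (simp add: y'_def c0_diff c0_scale \<kappa>_def)
  moreover have "cformB y' y' = 0"
    using assms(2-4) by (simp add: y'_def cB cformB_sym[of x y])
  ultimately have "y' = 0" by (rule iso_c0_zero)
  thus ?thesis by (auto simp: y'_def)
qed



theorem mainTheorem14:
  fixes \<rho> :: "complex ^ 2 ^ 2 \<Rightarrow> real \<times> 'h::{real_inner, complete_space} \<Rightarrow> real \<times> 'h"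
    and \<eta>1 \<eta>2 :: "(real \<times> 'h) \<times> (real \<times> 'h)"
  assumes "infinite_dim TYPE('h)" and "separable_space TYPE('h)"
    and "is_representation \<rho>" and "is_irreducible \<rho>"
    and "\<eta>1 \<noteq> 0" and "cformB \<eta>1 \<eta>1 = 0"
    and "\<forall>l b. l \<noteq> 0 \<longrightarrow> cproj_fixes (cext (\<rho> (gmat l b))) \<eta>1"
    and "\<forall>v. v \<noteq> 0 \<and> cformB v v = 0 \<and> (\<forall>l b. l \<noteq> 0 \<longrightarrow> cproj_fixes (cext (\<rho> (gmat l b))) v)
            \<longrightarrow> (\<exists>\<mu>. v = cscale \<mu> \<eta>1)"
    and "\<eta>2 \<noteq> 0" and "cformB \<eta>2 \<eta>2 = 0" and "\<not> (\<exists>\<mu>. \<eta>2 = cscale \<mu> \<eta>1)"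
    and "\<forall>l. l \<noteq> 0 \<longrightarrow> cproj_fixes (cext (\<rho> (gmat l 0))) \<eta>2"
    and "cformB \<eta>1 \<eta>2 = 1"
  shows "\<forall>b \<mu> K c.
           cscale \<mu> (cext (\<rho> (gmat 1 b)) \<eta>1) = \<eta>1 \<and>
           cformB c \<eta>1 = 0 \<and> cformB c \<eta>2 = 0 \<and>
           cscale \<mu> (cext (\<rho> (gmat 1 b)) \<eta>2) = cscale K \<eta>1 + \<eta>2 + c
           \<longrightarrow> Im K = 0"
proof -
  have rep: "\<forall>g\<in>SU11. bounded_linear (\<rho> g) \<and> bij (\<rho> g) \<and>
                (\<forall>x y. formB (\<rho> g x) (\<rho> g y) = formB x y)"
    "\<forall>g\<in>SU11. \<forall>h\<in>SU11. \<rho> (g ** h) = \<rho> g \<circ> \<rho> h"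
    "\<forall>x. continuous_on SU11 (\<lambda>g. \<rho> g x)"
    using assms(3) unfolding is_representation_def by auto
  define C where "C g = cext (\<rho> g)" for g
  have lin: "g \<in> SU11 \<Longrightarrow> linear (\<rho> g)" for g using rep(1) bounded_linear.linear by blast
  have Cs: "g \<in> SU11 \<Longrightarrow> C g (cscale a x) = cscale a (C g x)" for g a x
    unfolding C_def using lin cext_scale by blast
  have CJ: "g \<in> SU11 \<Longrightarrow> C g (Jc x) = Jc (C g x)" for g x
    unfolding C_def using lin cext_Jc by blast
  have CB: "g \<in> SU11 \<Longrightarrow> cformB (C g x) (C g y) = cformB x y" for g x y
    unfolding C_def using rep(1) cext_cformB by blast
  have Cm: "g \<in> SU11 \<Longrightarrow> h \<in> SU11 \<Longrightarrow> C (g ** h) x = C g (C h x)" for g h x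
    unfolding C_def using rep(2) by (simp add: cext_def)
  have r1: "\<rho> (mat 1) y = y" for y
  proof -
    have "\<rho> (mat 1) (\<rho> (mat 1) y) = \<rho> (mat 1) y"
      using rep(2) one_SU11 by (metis comp_apply matrix_mul_lid)
    moreover have "inj (\<rho> (mat 1))" using rep(1) one_SU11 bij_is_inj by blast
    ultimately show ?thesis by (meson injD)
  qed
  have C1: "C (mat 1) x = x" for x by (simp add: C_def cext_def r1)
  have SU: "l \<noteq> 0 \<Longrightarrow> gmat l b \<in> SU11" for l b by (rule gmat_SU11)
  have SU1: "gmat 1 b \<in> SU11" for b by (rule gmat_SU11) simp
  have fix1: "l \<noteq> 0 \<Longrightarrow> \<exists>a. C (gmat l b) \<eta>1 = cscale a \<eta>1" for l b
    using assms(7) unfolding C_def cproj_fixes_def by blast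
  have B21: "cformB \<eta>2 \<eta>1 = 1" using assms(13) cformB_sym[of \<eta>1 \<eta>2] by simp
  obtain \<nu> where nu: "Jc \<eta>1 = cscale \<nu> \<eta>1"
  proof -
    have "Jc \<eta>1 \<noteq> 0" using assms(5) Jc_eq_0 by blast
    moreover have "cformB (Jc \<eta>1) (Jc \<eta>1) = 0" using assms(6) by (simp add: cformB_Jc)
    moreover have "\<forall>l b. l \<noteq> 0 \<longrightarrow> cproj_fixes (cext (\<rho> (gmat l b))) (Jc \<eta>1)"
    proof (intro allI impI)
      fix l b :: real assume l: "l \<noteq> 0"
      obtain a where "C (gmat l b) \<eta>1 = cscale a \<eta>1" using fix1 l by blast
      hence "C (gmat l b) (Jc \<eta>1) = cscale (cnj a) (Jc \<eta>1)"
        using CJ[OF SU[OF l]] by (simp add: Jc_scale)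
      thus "cproj_fixes (cext (\<rho> (gmat l b))) (Jc \<eta>1)"
        unfolding cproj_fixes_def C_def by blast
    qed
    ultimately show ?thesis using assms(8) that by blast
  qed
  have nu1: "cnj \<nu> * \<nu> = 1"
  proof -
    have "cscale 1 \<eta>1 = cscale (cnj \<nu> * \<nu>) \<eta>1"
      by (metis Jc_Jc Jc_scale cscale_cscale cscale_one nu)
    thus ?thesis using cscale_cancel assms(5) by metis
  qed
  hence nu0: "\<nu> \<noteq> 0" by auto
  show ?thesis
  proof (cases "\<exists>\<gamma>. Jc \<eta>2 = cscale \<gamma> \<eta>2")
    case True
    then obtain \<gamma> where ga: "Jc \<eta>2 = cscale \<gamma> \<eta>2" by blast
    have "cformB (Jc \<eta>1) (Jc \<eta>2) = 1" using assms(13) by (simp add: cformB_Jc)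
    hence "\<nu> * cnj \<gamma> = 1" using nu ga assms(13) by (simp add: cB mult.commute)
    hence gnu: "\<gamma> = \<nu>" using nu1
      by (metis complex_cnj_cnj complex_cnj_mult complex_cnj_one mult.assoc mult.commute mult_1_right)
    show ?thesis
    proof (intro allI impI)
      fix b \<mu> K c
      assume H: "cscale \<mu> (cext (\<rho> (gmat 1 b)) \<eta>1) = \<eta>1 \<and>
           cformB c \<eta>1 = 0 \<and> cformB c \<eta>2 = 0 \<and>
           cscale \<mu> (cext (\<rho> (gmat 1 b)) \<eta>2) = cscale K \<eta>1 + \<eta>2 + c"
      define g where "g = gmat 1 b"
      have g: "g \<in> SU11" using SU1 g_def by simp
      define X1 where "X1 = C g \<eta>1"
      define X2 where "X2 = C g \<eta>2"
      have H1: "cscale \<mu> X1 = \<eta>1" using H by (simp add: X1_def C_def g_def)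
      have H2: "cscale \<mu> X2 = cscale K \<eta>1 + \<eta>2 + c" using H by (simp add: X2_def C_def g_def)
      have X10: "X1 \<noteq> 0" using H1 assms(5) by (auto simp: cscale_def zero_prod_def)
      have "Jc (cscale \<mu> X1) = cscale (cnj \<mu> * \<nu>) X1"
        by (simp add: Jc_scale X1_def CJ[OF g, symmetric] nu Cs[OF g] cscale_cscale)
      moreover have "Jc (cscale \<mu> X1) = cscale (\<nu> * \<mu>) X1"
        by (metis H1 nu cscale_cscale)
      ultimately have "cnj \<mu> * \<nu> = \<nu> * \<mu>" using cscale_cancel X10 by metis
      hence mu: "cnj \<mu> = \<mu>" using nu0 by (simp add: mult.commute)
      have "Jc (cscale \<mu> X2) = cscale \<gamma> (cscale \<mu> X2)"
        by (simp add: Jc_scale X2_def CJ[OF g, symmetric] ga Cs[OF g] cscale_cscale mu mult.commute)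
      hence E: "Jc (cscale K \<eta>1 + \<eta>2 + c) = cscale \<gamma> (cscale K \<eta>1 + \<eta>2 + c)"
        using H2 by simp
      have "cformB (Jc (cscale K \<eta>1 + \<eta>2 + c)) \<eta>2 = cnj K * \<nu>"
      proof -
        have "cformB (Jc c) \<eta>2 = 0"
          by (metis Jc_Jc cformB_Jc cformB_scale_right complex_cnj_zero ga H mult_zero_right)
        thus ?thesis using nu ga assms(10,13) by (simp add: Jc_add Jc_scale cB)
      qed
      moreover have "cformB (cscale \<gamma> (cscale K \<eta>1 + \<eta>2 + c)) \<eta>2 = \<gamma> * K"
        using H assms(10,13) by (simp add: cB)
      ultimately have "\<gamma> * K = cnj K * \<nu>" using E by simp
      hence "K = cnj K" using gnu nu0 by (simp add: mult.commute)
      hence "Im K = - Im K" by (metis cnj.sel(2))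
      thus "Im K = 0" by linarith
    qed
  next
    case False
    have J2nz: "Jc \<eta>2 \<noteq> 0" using assms(9) Jc_eq_0 by blast
    have J2iso: "cformB (Jc \<eta>2) (Jc \<eta>2) = 0" using assms(10) by (simp add: cformB_Jc)
    have b1: "cformB \<eta>1 (Jc \<eta>2) \<noteq> 0"
    proof
      assume "cformB \<eta>1 (Jc \<eta>2) = 0"
      hence "cformB (Jc \<eta>2) \<eta>1 = 0" using cformB_sym[of "Jc \<eta>2" \<eta>1] by simp
      then obtain \<kappa> where "Jc \<eta>2 = cscale \<kappa> \<eta>1" using iso_prop assms(5,6) J2iso by blast
      hence "\<eta>2 = cscale (cnj \<kappa> * \<nu>) \<eta>1" by (metis Jc_Jc Jc_scale nu cscale_cscale)
      thus False using assms(11) by blast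
    qed
    have b2: "cformB \<eta>2 (Jc \<eta>2) \<noteq> 0"
    proof
      assume "cformB \<eta>2 (Jc \<eta>2) = 0"
      hence "cformB (Jc \<eta>2) \<eta>2 = 0" using cformB_sym[of "Jc \<eta>2" \<eta>2] by simp
      then obtain \<kappa> where "Jc \<eta>2 = cscale \<kappa> \<eta>2" using iso_prop assms(9,10) J2iso by blast
      thus False using False by blast
    qed
    have sunit: "\<exists>s. C (gmat l 0) \<eta>2 = cscale s \<eta>2 \<and> cnj s * s = 1" if l: "l \<noteq> 0" for l
    proof -
      have g: "gmat l 0 \<in> SU11" using SU l by blast
      obtain s where s: "C (gmat l 0) \<eta>2 = cscale s \<eta>2"
        using assms(12) l unfolding C_def cproj_fixes_def by blast
      obtain a where a: "C (gmat l 0) \<eta>1 = cscale a \<eta>1" using fix1 l by blast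
      have sJ: "C (gmat l 0) (Jc \<eta>2) = cscale (cnj s) (Jc \<eta>2)"
        using CJ[OF g] s by (simp add: Jc_scale)
      have e1: "a * cnj s = 1" using CB[OF g, of \<eta>1 \<eta>2] a s assms(13) by (simp add: cB mult.commute)
      have "a * s * cformB \<eta>1 (Jc \<eta>2) = cformB \<eta>1 (Jc \<eta>2)"
        using CB[OF g, of \<eta>1 "Jc \<eta>2"] a sJ by (simp add: cB mult.assoc mult.commute)
      hence e2: "a * s = 1" using b1 by simp
      have "s * s * cformB \<eta>2 (Jc \<eta>2) = cformB \<eta>2 (Jc \<eta>2)"
        using CB[OF g, of \<eta>2 "Jc \<eta>2"] s sJ by (simp add: cB mult.assoc)
      hence e3: "s * s = 1" using b2 by simp
      have "cnj s = s" using e1 e2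
        by (metis mult.left_commute mult_1_right)
      thus ?thesis using s e3 by auto
    qed
    define k where "k b = cformB (C (gmat 1 b) \<eta>2) \<eta>2" for b
    have kscale: "k (l^2 * b) = k b" if l: "l \<noteq> 0" for l b
    proof -
      obtain s where s: "C (gmat l 0) \<eta>2 = cscale s \<eta>2" "cnj s * s = 1" using sunit l by blast
      have gl: "gmat l 0 \<in> SU11" using SU l by blast
      have m1: "gmat 1 (l^2 * b) ** gmat l 0 = gmat l 0 ** gmat 1 b"
        using l by (simp add: gmat_mult power2_eq_square)
      have "C (gmat 1 (l^2 * b)) (C (gmat l 0) \<eta>2) = C (gmat l 0) (C (gmat 1 b) \<eta>2)"
        using Cm[OF SU1 gl] Cm[OF gl SU1] m1 by metis
      hence "cformB (C (gmat 1 (l^2 * b)) (cscale s \<eta>2)) (cscale s \<eta>2) = k b"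
        using CB[OF gl] s(1) k_def by metis
      thus ?thesis using s(2) by (simp add: Cs[OF SU1] cB k_def mult.assoc[symmetric])
    qed
    have kcont: "continuous_on UNIV k"
    proof -
      have c1: "continuous_on UNIV (\<lambda>b. \<rho> (gmat 1 b) x)" for x
        using continuous_on_compose2[OF rep(3)[rule_format, of x] cont_gmat[of UNIV]] SU1 by blast
      show ?thesis unfolding k_def C_def cext_def cformB_def formB_def Complex_eq
        by (intro continuous_intros c1)
    qed
    have k0: "k 0 = 0" using assms(10) by (simp add: k_def gmat_10 C1)
    have kz: "k b = 0" for b
    proof -
      define f where "f x = k (x^2 * b)" for x :: real
      have "isCont f 0" unfolding f_def
      proof (rule isCont_o2[where g=k])
        show "isCont (\<lambda>x::real. x^2 * b) 0" by (intro continuous_intros)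
        show "isCont k (0^2 * b)" using kcont by (simp add: continuous_on_eq_continuous_at)
      qed
      hence "(f \<longlongrightarrow> f 0) (at 0)" by (simp add: isCont_def)
      moreover have "(f \<longlongrightarrow> k b) (at 0)"
      proof (rule tendsto_eventually)
        show "\<forall>\<^sub>F x in at 0. f x = k b" unfolding f_def
          using kscale by (auto simp: eventually_at intro!: exI[of _ 1])
      qed
      ultimately have "f 0 = k b" by (rule tendsto_unique[OF at_neq_bot])
      thus ?thesis using k0 by (simp add: f_def)
    qed
    have Tfix: "\<exists>m. C (gmat 1 b) \<eta>2 = cscale m \<eta>2" for b
    proof -
      define X where "X = C (gmat 1 b) \<eta>2"
      define m where "m = cformB X \<eta>1"
      define c where "c = X - cscale m \<eta>2"
      have XX: "cformB X X = 0" using CB[OF SU1] assms(10) X_def by metis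
      have X2: "cformB X \<eta>2 = 0" using kz k_def X_def by metis
      have c1: "cformB c \<eta>1 = 0" using B21 by (simp add: c_def cB m_def)
      have cc: "cformB c c = 0" using XX X2 assms(10)
        by (simp add: c_def cB cformB_sym[of \<eta>2 X])
      have "c = 0"
      proof (rule ccontr)
        assume "c \<noteq> 0"
        obtain \<kappa> where "c = cscale \<kappa> \<eta>1" using iso_prop[OF assms(5,6) cc c1] by blast
        moreover have "cformB c \<eta>2 = 0" using X2 assms(10) by (simp add: c_def cB)
        ultimately have "\<kappa> = 0" using assms(13) by (simp add: cB)
        thus False using \<open>c \<noteq> 0\<close> \<open>c = cscale \<kappa> \<eta>1\<close> by (simp add: cscale_zero)
      qed
      thus ?thesis unfolding c_def X_def by auto
    qed
    have "\<forall>l b. l \<noteq> 0 \<longrightarrow> cproj_fixes (cext (\<rho> (gmat l b))) \<eta>2"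
    proof (intro allI impI)
      fix l b :: real assume l: "l \<noteq> 0"
      have gl: "gmat l 0 \<in> SU11" using SU l by blast
      have m: "gmat l b = gmat l 0 ** gmat 1 (b / l)" using l by (simp add: gmat_mult)
      obtain s where s: "C (gmat l 0) \<eta>2 = cscale s \<eta>2" using sunit l by blast
      obtain m' where m': "C (gmat 1 (b/l)) \<eta>2 = cscale m' \<eta>2" using Tfix by blast
      have "C (gmat l b) \<eta>2 = cscale (m' * s) \<eta>2"
        using m Cm[OF gl SU1] m' Cs[OF gl] s by (simp add: cscale_cscale mult.commute)
      thus "cproj_fixes (cext (\<rho> (gmat l b))) \<eta>2" unfolding cproj_fixes_def C_def by blast
    qed
    hence "\<exists>\<mu>. \<eta>2 = cscale \<mu> \<eta>1" using assms(8,9,10) by blast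
    thus ?thesis using assms(11) by blast
  qed
qed

end
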